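(* Let $X$ be a finite set with $n$ elements. For all functions $f,g:X\to X$, \[\deg(f\circ g)\leq\sqrt{n}\,\sqrt{\deg(f)}\,\deg(g).\] Furthermore, equality holds if and only if $f$ is a constant function and $g$ is a bijection.
   Context: For finite sets $X,Y$ and a function $f:X\to Y$, the degree of $f$ is $\deg(f)=\frac{1}{|X|}\sum_{y\in Y}|f^{-1}(y)|^2$. *)

theory Defs
  imports Complex_Main "HOL-Library.FuncSet"
begin

definition deg :: "'a set \<Rightarrow> 'b set \<Rightarrow> ('a \<Rightarrow> 'b) \<Rightarrow> real" where
  "deg X Y f = (\<Sum>y\<in>Y. (real (card {x\<in>X. f x = y}))^2) / real (card X)"

end

theory Submission
  imports Defs
begin

lemma card_ind:
  assumes "finite X"
  shows "real (card {x\<in>X. P x}) = (\<Sum>x\<in>X. if P x then 1 else 0)"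
proof -
  have "real (card {x\<in>X. P x}) = (\<Sum>x\<in>{x\<in>X. P x}. 1)" by simp
  also have "\<dots> = (\<Sum>x\<in>X. if P x then 1 else 0)" using assms by (rule sum.inter_filter)
  finally show ?thesis .
qed

lemma card_pos_fib:
  assumes "finite X" "x \<in> X" "P x"
  shows "card {x\<in>X. P x} > 0"
proof -
  have ne: "{x\<in>X. P x} \<noteq> {}" using assms by blast
  have fi: "finite {x\<in>X. P x}" using assms(1) by (rule finite_subset[rotated]) blast
  show ?thesis using ne fi card_gt_0_iff by blast
qed

lemma deg_const:
  assumes "finite X" "X \<noteq> {}" "c \<in> X" "\<forall>x\<in>X. h x = c"
  shows "deg X X h = real (card X)"
proof -
  have "(\<Sum>y\<in>X. (real (card {x\<in>X. h x = y}))^2) = (\<Sum>y\<in>X. if y = c then (real (card X))^2 else 0)"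
  proof (rule sum.cong)
    fix y assume "y \<in> X"
    show "(real (card {x\<in>X. h x = y}))^2 = (if y = c then (real (card X))^2 else 0)"
    proof (cases "y = c")
      case True
      then have "{x\<in>X. h x = y} = X" using assms by auto
      then show ?thesis using True by simp
    next
      case False
      then have "{x\<in>X. h x = y} = {}" using assms by auto
      then have "card {x\<in>X. h x = y} = 0" by (simp only: card.empty)
      then show ?thesis using False by simp
    qed
  qed simp
  also have "\<dots> = (real (card X))^2" using assms by (simp add: sum.delta)
  finally show ?thesis using assms by (simp add: deg_def power2_eq_square)
qed

theorem mainTheorem2:
  fixes X :: "'a set" and f g :: "'a \<Rightarrow> 'a" and n :: nat
  assumes "finite X" and "X \<noteq> {}" and "card X = n"
    and "f \<in> X \<rightarrow> X" and "g \<in> X \<rightarrow> X"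
  shows "deg X X (f \<circ> g) \<le> sqrt (real n) * sqrt (deg X X f) * deg X X g
    \<and> (deg X X (f \<circ> g) = sqrt (real n) * sqrt (deg X X f) * deg X X g
           \<longleftrightarrow> (\<exists>c. \<forall>x\<in>X. f x = c) \<and> bij_betw g X X)"
proof -
  note fin = assms(1)
  have fX: "f y \<in> X" if "y \<in> X" for y using assms(4) that by auto
  have gX: "g y \<in> X" if "y \<in> X" for y using assms(5) that by auto
  have "card X > 0" using assms(1,2) card_gt_0_iff by blast
  then have npos: "real n > 0" using assms(3) by simp
  define a where "a y = real (card {x\<in>X. g x = y})" for y
  define b where "b z = real (card {y\<in>X. f y = z})" for z
  define c where "c z = real (card {x\<in>X. f (g x) = z})" for z
  define A where "A = (\<Sum>y\<in>X. (a y)^2)"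
  define B where "B = (\<Sum>z\<in>X. (b z)^2)"
  define L where "L = (\<Sum>z\<in>X. (c z)^2)"
  define T where "T = (\<Sum>y\<in>X. (a y)^2 * b (f y))"
  have a_nn: "a y \<ge> 0" for y by (simp add: a_def)
  have b_nn: "b y \<ge> 0" for y by (simp add: b_def)
  have B_nn: "B \<ge> 0" unfolding B_def by (intro sum_nonneg) simp
  have degfg: "deg X X (f \<circ> g) = L / real n"
    by (simp add: deg_def L_def c_def assms(3))
  have degf: "deg X X f = B / real n"
    by (simp add: deg_def B_def b_def assms(3))
  have degg: "deg X X g = A / real n"
    by (simp add: deg_def A_def a_def assms(3))
  have a_ind: "a y = (\<Sum>x\<in>X. if g x = y then 1 else 0)" for y
    unfolding a_def using fin by (rule card_ind)
  have b_ind: "b z = (\<Sum>y\<in>X. if f y = z then 1 else 0)" for z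
    unfolding b_def using fin by (rule card_ind)
  have c_eq: "c z = (\<Sum>y\<in>X. if f y = z then a y else 0)" for z
  proof -
    have "(\<Sum>y\<in>X. if f y = z then a y else 0)
        = (\<Sum>y\<in>X. \<Sum>x\<in>X. if g x = y \<and> f y = z then 1 else 0)"
      by (intro sum.cong refl) (auto simp: a_ind)
    also have "\<dots> = (\<Sum>x\<in>X. \<Sum>y\<in>X. if g x = y \<and> f y = z then 1 else 0)"
      by (rule sum.swap)
    also have "\<dots> = (\<Sum>x\<in>X. if f (g x) = z then 1 else 0)"
    proof (intro sum.cong refl)
      fix x assume "x \<in> X"
      have "(\<Sum>y\<in>X. if g x = y \<and> f y = z then 1 else 0)
          = (\<Sum>y\<in>X. if g x = y then (if f (g x) = z then 1 else 0) else (0::real))"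
        by (intro sum.cong refl) auto
      also have "\<dots> = (if f (g x) = z then 1 else 0)"
        using fin gX[OF \<open>x \<in> X\<close>] by (simp add: sum.delta)
      finally show "(\<Sum>y\<in>X. if g x = y \<and> f y = z then 1 else 0) = (if f (g x) = z then 1 else (0::real))" .
    qed
    also have "\<dots> = c z" unfolding c_def using fin by (rule card_ind[symmetric])
    finally show ?thesis by simp
  qed
  have L_eq: "L = (\<Sum>y\<in>X. \<Sum>y'\<in>X. if f y = f y' then a y * a y' else 0)"
  proof -
    have "L = (\<Sum>z\<in>X. \<Sum>y\<in>X. \<Sum>y'\<in>X. (if f y = z then a y else 0) * (if f y' = z then a y' else 0))"
      unfolding L_def c_eq power2_eq_square by (simp add: sum_product)
    also have "\<dots> = (\<Sum>y\<in>X. \<Sum>z\<in>X. \<Sum>y'\<in>X. (if f y = z then a y else 0) * (if f y' = z then a y' else 0))"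
      by (rule sum.swap)
    also have "\<dots> = (\<Sum>y\<in>X. \<Sum>y'\<in>X. \<Sum>z\<in>X. (if f y = z then a y else 0) * (if f y' = z then a y' else 0))"
      by (intro sum.cong refl sum.swap)
    also have "\<dots> = (\<Sum>y\<in>X. \<Sum>y'\<in>X. if f y = f y' then a y * a y' else 0)"
    proof (intro sum.cong refl)
      fix y y' assume "y \<in> X" "y' \<in> X"
      have "(\<Sum>z\<in>X. (if f y = z then a y else 0) * (if f y' = z then a y' else 0))
          = (\<Sum>z\<in>X. if f y = z then (if f y = f y' then a y * a y' else 0) else 0)"
        by (intro sum.cong refl) auto
      also have "\<dots> = (if f y = f y' then a y * a y' else 0)"
        using fin fX[OF \<open>y \<in> X\<close>] by (simp add: sum.delta)
      finally show "(\<Sum>z\<in>X. (if f y = z then a y else 0) * (if f y' = z then a y' else 0))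
          = (if f y = f y' then a y * a y' else 0)" .
    qed
    finally show ?thesis .
  qed
  have T_eq: "T = (\<Sum>y\<in>X. \<Sum>y'\<in>X. if f y = f y' then (a y)^2 else 0)"
    unfolding T_def b_ind sum_distrib_left by (intro sum.cong refl) auto
  have T_eq2: "T = (\<Sum>y\<in>X. \<Sum>y'\<in>X. if f y = f y' then (a y')^2 else 0)"
    unfolding T_eq by (subst sum.swap) (intro sum.cong refl, auto)
  have LT: "L \<le> T"
  proof -
    have "L \<le> (\<Sum>y\<in>X. \<Sum>y'\<in>X. if f y = f y' then ((a y)^2 + (a y')^2) / 2 else 0)"
      unfolding L_eq
    proof (intro sum_mono)
      fix y y'
      have "a y * a y' \<le> ((a y)^2 + (a y')^2) / 2"
        using sum_squares_ge_zero[of "a y - a y'" 0] by (simp add: power2_eq_square algebra_simps)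
      then show "(if f y = f y' then a y * a y' else 0) \<le> (if f y = f y' then ((a y)^2 + (a y')^2) / 2 else 0)"
        by simp
    qed
    also have "\<dots> = (\<Sum>y\<in>X. \<Sum>y'\<in>X. (if f y = f y' then (a y)^2 else 0) / 2
                                + (if f y = f y' then (a y')^2 else 0) / 2)"
      by (intro sum.cong refl) auto
    also have "\<dots> = (\<Sum>y\<in>X. \<Sum>y'\<in>X. if f y = f y' then (a y)^2 else 0) / 2
                    + (\<Sum>y\<in>X. \<Sum>y'\<in>X. if f y = f y' then (a y')^2 else 0) / 2"
      by (simp only: sum.distrib sum_divide_distrib)
    also have "\<dots> = T / 2 + T / 2" by (simp only: T_eq[symmetric] T_eq2[symmetric])
    finally show ?thesis by simp
  qed
  have bsq: "b (f y) \<le> sqrt B" if "y \<in> X" for y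
  proof -
    have "(b (f y))^2 \<le> B" unfolding B_def
      by (rule member_le_sum) (auto simp: fin fX[OF that])
    then have "sqrt ((b (f y))^2) \<le> sqrt B" by (rule real_sqrt_le_mono)
    then show ?thesis using b_nn by simp
  qed
  have TB: "T \<le> sqrt B * A"
    unfolding T_def A_def sum_distrib_left
  proof (intro sum_mono)
    fix y assume "y \<in> X"
    show "(a y)^2 * b (f y) \<le> sqrt B * (a y)^2"
      using mult_left_mono[OF bsq[OF \<open>y \<in> X\<close>] zero_le_power2[of "a y"]] by (simp add: mult.commute)
  qed
  have rhs: "sqrt (real n) * sqrt (deg X X f) * deg X X g = sqrt B * A / real n"
    using npos B_nn by (simp add: degf degg real_sqrt_divide field_simps)
  have ineq: "deg X X (f \<circ> g) \<le> sqrt (real n) * sqrt (deg X X f) * deg X X g"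
    unfolding rhs degfg using LT TB npos by (simp add: divide_right_mono)
  have suma: "(\<Sum>y\<in>X. a y) = real n"
  proof -
    have "(\<Sum>y\<in>X. a y) = (\<Sum>y\<in>X. \<Sum>x\<in>X. if g x = y then 1 else 0)" by (simp add: a_ind)
    also have "\<dots> = (\<Sum>x\<in>X. \<Sum>y\<in>X. if g x = y then 1 else 0)" by (rule sum.swap)
    also have "\<dots> = (\<Sum>x\<in>X. (1::real))"
      by (intro sum.cong refl) (simp add: fin gX sum.delta)
    finally show ?thesis using assms(3) by simp
  qed
  have eqiff: "deg X X (f \<circ> g) = sqrt (real n) * sqrt (deg X X f) * deg X X g
           \<longleftrightarrow> (\<exists>c. \<forall>x\<in>X. f x = c) \<and> bij_betw g X X"
  proof
    assume eq: "deg X X (f \<circ> g) = sqrt (real n) * sqrt (deg X X f) * deg X X g"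
    then have "L = sqrt B * A" using degfg rhs npos by (simp add: field_simps)
    then have TA: "T = sqrt B * A" using LT TB by linarith
    have "(\<Sum>y\<in>X. (a y)^2 * (sqrt B - b (f y))) = sqrt B * A - T"
    proof -
      have "(\<Sum>y\<in>X. (a y)^2 * (sqrt B - b (f y))) = (\<Sum>y\<in>X. sqrt B * (a y)^2 - (a y)^2 * b (f y))"
        by (intro sum.cong refl) (simp add: algebra_simps)
      also have "\<dots> = sqrt B * A - T"
        unfolding T_def A_def by (simp only: sum_subtractf sum_distrib_left)
      finally show ?thesis .
    qed
    then have "(\<Sum>y\<in>X. (a y)^2 * (sqrt B - b (f y))) = 0" using TA by simp
    moreover have "\<forall>y\<in>X. (a y)^2 * (sqrt B - b (f y)) \<ge> 0"
    proof
      fix y assume "y \<in> X"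
      then have "sqrt B - b (f y) \<ge> 0" using bsq by simp
      then show "(a y)^2 * (sqrt B - b (f y)) \<ge> 0" by simp
    qed
    ultimately have zero: "\<forall>y\<in>X. (a y)^2 * (sqrt B - b (f y)) = 0"
      using sum_nonneg_eq_0_iff[OF fin, of "\<lambda>y. (a y)^2 * (sqrt B - b (f y))"] by simp
    obtain x0 where x0: "x0 \<in> X" using assms(2) by blast
    define y0 where "y0 = g x0"
    have y0X: "y0 \<in> X" using gX[OF x0] y0_def by simp
    have "x0 \<in> {x\<in>X. g x = y0}" using x0 y0_def by simp
    then have "card {x\<in>X. g x = y0} > 0" using card_pos_fib[OF fin x0, of "\<lambda>x. g x = y0"] y0_def by simp
    then have "a y0 > 0" unfolding a_def by simp
    moreover have "a y0 = 0 \<or> sqrt B = b (f y0)" using zero y0X by simp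
    ultimately have "b (f y0) = sqrt B" by auto
    then have bB: "(b (f y0))^2 = B" using B_nn by simp
    have "B = (b (f y0))^2 + (\<Sum>z\<in>X - {f y0}. (b z)^2)"
      unfolding B_def using fin fX[OF y0X] by (simp add: sum.remove)
    then have "(\<Sum>z\<in>X - {f y0}. (b z)^2) = 0" using bB by simp
    then have bz: "\<forall>z\<in>X - {f y0}. (b z)^2 = 0"
      using sum_nonneg_eq_0_iff[of "X - {f y0}" "\<lambda>z. (b z)^2"] fin by simp
    have fconst: "\<forall>x\<in>X. f x = f y0"
    proof
      fix x assume xX: "x \<in> X"
      show "f x = f y0"
      proof (rule ccontr)
        assume ne: "f x \<noteq> f y0"
        then have "b (f x) = 0" using bz fX[OF xX] by simp
        moreover have "x \<in> {y\<in>X. f y = f x}" using xX by simp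
        then have "card {y\<in>X. f y = f x} > 0" using card_pos_fib[OF fin xX, of "\<lambda>y. f y = f x"] by simp
        ultimately show False unfolding b_def by simp
      qed
    qed
    have c0X: "f y0 \<in> X" using fX[OF y0X] .
    have "deg X X f = real n" using deg_const[OF fin assms(2) c0X fconst] assms(3) by simp
    moreover have "deg X X (f \<circ> g) = real n"
      using deg_const[OF fin assms(2) c0X, of "f \<circ> g"] fconst gX assms(3) by simp
    ultimately have "real n = sqrt (real n) * sqrt (real n) * deg X X g" using eq by simp
    then have "real n = real n * deg X X g" using npos by simp
    then have "deg X X g = 1" using npos by simp
    then have An: "A = real n" using degg npos by simp
    have "(\<Sum>y\<in>X. (a y)^2 - a y) = 0" using An suma unfolding A_def by (simp add: sum_subtractf)
    moreover have "\<forall>y\<in>X. (a y)^2 - a y \<ge> 0"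
    proof
      fix y
      have "card {x\<in>X. g x = y} \<le> (card {x\<in>X. g x = y})^2" by (simp add: power2_eq_square)
      then show "(a y)^2 - a y \<ge> 0" unfolding a_def
        by (metis diff_ge_0_iff_ge of_nat_le_iff of_nat_power)
    qed
    ultimately have sq: "\<forall>y\<in>X. (a y)^2 = a y"
      using sum_nonneg_eq_0_iff[OF fin, of "\<lambda>y. (a y)^2 - a y"] by simp
    have inj: "inj_on g X"
    proof (rule inj_onI)
      fix x1 x2 assume x1: "x1 \<in> X" and x2: "x2 \<in> X" and e: "g x1 = g x2"
      show "x1 = x2"
      proof (rule ccontr)
        assume ne: "x1 \<noteq> x2"
        have "{x1, x2} \<subseteq> {x\<in>X. g x = g x1}" using x1 x2 e by auto
        then have "card {x1, x2} \<le> card {x\<in>X. g x = g x1}" using fin by (intro card_mono) auto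
        then have "a (g x1) \<ge> 2" unfolding a_def using ne by simp
        moreover have "(a (g x1))^2 = a (g x1)" using sq gX[OF x1] by simp
        ultimately show False by (simp add: power2_eq_square)
      qed
    qed
    have "g ` X = X" using endo_inj_surj[OF fin _ inj] gX by auto
    then have "bij_betw g X X" using inj by (simp add: bij_betw_def)
    then show "(\<exists>c. \<forall>x\<in>X. f x = c) \<and> bij_betw g X X" using fconst by blast
  next
    assume H: "(\<exists>c. \<forall>x\<in>X. f x = c) \<and> bij_betw g X X"
    then obtain c0 where fconst: "\<forall>x\<in>X. f x = c0" by blast
    obtain x0 where x0: "x0 \<in> X" using assms(2) by blast
    have c0X: "c0 \<in> X" using fX[OF x0] fconst x0 by simp
    have bij: "bij_betw g X X" using H by blast
    have a1: "a y = 1" if yX: "y \<in> X" for y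
    proof -
      obtain x where x: "x \<in> X" "g x = y" using bij yX unfolding bij_betw_def by force
      have "\<forall>x1\<in>{x\<in>X. g x = y}. \<forall>x2\<in>{x\<in>X. g x = y}. x1 = x2"
        using bij unfolding bij_betw_def inj_on_def by auto
      then have le: "card {x\<in>X. g x = y} \<le> Suc 0" using card_le_Suc0_iff_eq[of "{x\<in>X. g x = y}"] fin by simp
      have "card {x\<in>X. g x = y} > 0" using card_pos_fib[OF fin x(1), of "\<lambda>x. g x = y"] x(2) by simp
      then have "card {x\<in>X. g x = y} = 1" using le by simp
      then show ?thesis unfolding a_def by simp
    qed
    have "A = real n" unfolding A_def using a1 suma by simp
    then have dg: "deg X X g = 1" using degg npos by simp
    have df: "deg X X f = real n" using deg_const[OF fin assms(2) c0X fconst] assms(3) by simp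
    have dfg: "deg X X (f \<circ> g) = real n"
      using deg_const[OF fin assms(2) c0X, of "f \<circ> g"] fconst gX assms(3) by simp
    show "deg X X (f \<circ> g) = sqrt (real n) * sqrt (deg X X f) * deg X X g"
      using dg df dfg npos by simp
  qed
  show ?thesis using ineq eqiff by blast
qed

end
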